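(* Let $(X,\mathcal{B},\mu)$ be a standard $\sigma$-finite measure space and let $\xi$ be a probability measure on $(X^*,\mathcal{B}^* )$ whose barycenter is $\mu$. Let $\{A_n\}_{n=1}^{\infty}$ be a measurable partition of $X$ into sets with $\mu(A_n)<\infty$. Then $(X^*,\mathcal{B}^* )$ is isomorphic modulo $\xi$ to $$\Big(\prod_{n=1}^{\infty} C A_n^\dagger,\ \bigotimes_{n=1}^{\infty}\mathcal{B}(C A_n^\dagger)\Big),$$ where for a space $Z$, $CZ:=(Z\times\mathbb{R}_+)/(Z\times\{0\})$ denotes the cone of $Z$, $A_n^\dagger$ is the set of probability measures on $A_n$ equipped with the natural $\sigma$-algebra coming from $\mathcal{B}\cap A_n$, and $\mathcal{B}(CA_n^\dagger)$ is the induced $\sigma$-algebra on the cone.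
   Context: $X^*$ denotes the set of all measures on $(X,\mathcal{B})$, and $\mathcal{B}^*$ is the $\sigma$-algebra on $X^*$ generated by the sets $\{\gamma\in X^*:\gamma(B)\in[a,b]\}$ for $B\in\mathcal{B}$, $0\le a\le b\le\infty$. A probability $\xi$ on $(X^*,\mathcal{B}^* )$ has barycenter $\mu$ if for every $f\in L^1(X,\mathcal{B},\mu)$, $\int f\,d\mu=\int f^*(\gamma)\,d\xi(\gamma)$, where $f^*(\gamma)=\int f\,d\gamma$; in particular, if $\mu(A)=0$ then $\xi(\{\gamma:\gamma(A)>0\})=0$. "Isomorphic modulo $\xi$" means there is a $\mathcal{B}^*$-measurable map defined and injective on a set of full $\xi$-measure onto the product space with measurable inverse. *)

theory Defs
  imports "HOL-Probability.Probability"
begin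

definition borel_embedding :: "'a measure \<Rightarrow> ('a \<Rightarrow> 'p::polish_space) \<Rightarrow> bool" where
  "borel_embedding M \<phi> \<longleftrightarrow> (\<exists>S \<in> sets borel. bij_betw \<phi> (space M) S \<and>
      \<phi> \<in> M \<rightarrow>\<^sub>M restrict_space borel S \<and>
      the_inv_into (space M) \<phi> \<in> restrict_space borel S \<rightarrow>\<^sub>M M)"

definition measures_space :: "'a measure \<Rightarrow> 'a measure measure" where
  "measures_space M = sigma {\<gamma>. sets \<gamma> = sets M}
     {{\<gamma>. sets \<gamma> = sets M \<and> emeasure \<gamma> B \<in> {a..b}} | B a b. B \<in> sets M \<and> a \<le> b}"

definition has_barycenter :: "'a measure measure \<Rightarrow> 'a measure \<Rightarrow> bool" where
  "has_barycenter \<xi> M \<longleftrightarrow> (\<forall>f::'a \<Rightarrow> real. integrable M f \<longrightarrow>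
      (AE \<gamma> in \<xi>. integrable \<gamma> f) \<and> integrable \<xi> (\<lambda>\<gamma>. \<integral>x. f x \<partial>\<gamma>) \<and>
      (\<integral>x. f x \<partial>M) = (\<integral>\<gamma>. (\<integral>x. f x \<partial>\<gamma>) \<partial>\<xi>))"

text \<open>Cone CZ = (Z x R_+)/(Z x {0}); the apex is None, the class of (z,t), t>0, is Some (z,t).
  The sigma-algebra is the quotient (final) sigma-algebra of the product sigma-algebra.\<close>
definition cone_quot :: "'b \<times> real \<Rightarrow> ('b \<times> real) option" where
  "cone_quot = (\<lambda>(z,t). if t = 0 then None else Some (z,t))"

definition meas_cone :: "'b measure \<Rightarrow> ('b \<times> real) option measure" where
  "meas_cone Z = (let R = restrict_space borel {0::real..};
                 \<Omega> = {None} \<union> cone_quot ` (space Z \<times> {0::real..})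
             in measure_of \<Omega>
                  {U. U \<subseteq> \<Omega> \<and> cone_quot -` U \<inter> space (Z \<Otimes>\<^sub>M R) \<in> sets (Z \<Otimes>\<^sub>M R)} (\<lambda>_. 0))"

definition iso_mod :: "'x measure \<Rightarrow> 'y measure \<Rightarrow> bool" where
  "iso_mod \<xi> P \<longleftrightarrow> (\<exists>Y \<Phi> \<psi>. Y \<in> sets \<xi> \<and> emeasure \<xi> (space \<xi> - Y) = 0 \<and>
      \<Phi> \<in> restrict_space \<xi> Y \<rightarrow>\<^sub>M P \<and> inj_on \<Phi> Y \<and> \<Phi> ` Y = space P \<and>
      \<psi> \<in> P \<rightarrow>\<^sub>M restrict_space \<xi> Y \<and> (\<forall>y\<in>Y. \<psi> (\<Phi> y) = y))"

end

theory Submission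
  imports Defs
begin


lemma measures_space_gen_sub:
  "{{\<gamma>. sets \<gamma> = sets M \<and> emeasure \<gamma> B \<in> {a..b}} | B a b. B \<in> sets M \<and> a \<le> b} \<subseteq> Pow {\<gamma>. sets \<gamma> = sets M}"
  by auto

lemma space_measures_space: "space (measures_space M) = {\<gamma>. sets \<gamma> = sets M}"
  unfolding measures_space_def by (rule space_measure_of) auto

lemma measurable_emeasure_measures_space:
  assumes "B \<in> sets M"
  shows "(\<lambda>\<gamma>. emeasure \<gamma> B) \<in> borel_measurable (measures_space M)"
proof (rule borel_measurableI_le)
  fix y :: ennreal
  have "{x \<in> space (measures_space M). emeasure x B \<le> y} = {\<gamma>. sets \<gamma> = sets M \<and> emeasure \<gamma> B \<in> {0..y}}"
    by (auto simp: space_measures_space)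
  also have "\<dots> \<in> sets (measures_space M)"
    unfolding measures_space_def using assms
    by (subst sets_measure_of[OF measures_space_gen_sub]) (rule sigma_sets.Basic, intro CollectI exI[where x=B] exI[where x=0] exI[where x=y], simp)
  finally show "{x \<in> space (measures_space M). emeasure x B \<le> y} \<in> sets (measures_space M)" .
qed

lemma measurable_measures_spaceI:
  assumes "\<And>x. x \<in> space N \<Longrightarrow> sets (f x) = sets M"
    and "\<And>B. B \<in> sets M \<Longrightarrow> (\<lambda>x. emeasure (f x) B) \<in> borel_measurable N"
  shows "f \<in> N \<rightarrow>\<^sub>M measures_space M"
  unfolding measures_space_def
proof (rule measurable_measure_of[OF measures_space_gen_sub])
  show "f \<in> space N \<rightarrow> {\<gamma>. sets \<gamma> = sets M}" using assms(1) by auto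
next
  fix y assume "y \<in> {{\<gamma>. sets \<gamma> = sets M \<and> emeasure \<gamma> B \<in> {a..b}} | B a b. B \<in> sets M \<and> a \<le> b}"
  then obtain B a b where y: "y = {\<gamma>. sets \<gamma> = sets M \<and> emeasure \<gamma> B \<in> {a..b}}" and B: "B \<in> sets M" by blast
  have "f -` y \<inter> space N = {x \<in> space N. a \<le> emeasure (f x) B \<and> emeasure (f x) B \<le> b}"
    using assms(1) by (auto simp: y)
  also have "\<dots> \<in> sets N" using assms(2)[OF B] by measurable
  finally show "f -` y \<inter> space N \<in> sets N" .
qed

definition "cone_space Z = {None} \<union> cone_quot ` (space Z \<times> {0::real..})"
definition "cone_gen Z = {U. U \<subseteq> cone_space Z \<and> cone_quot -` U \<inter> space (Z \<Otimes>\<^sub>M restrict_space borel {0::real..}) \<in> sets (Z \<Otimes>\<^sub>M restrict_space borel {0::real..})}"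

lemma meas_cone_alt: "meas_cone Z = measure_of (cone_space Z) (cone_gen Z) (\<lambda>_. 0)"
  unfolding meas_cone_def cone_space_def cone_gen_def Let_def by simp

lemma cone_gen_sub: "cone_gen Z \<subseteq> Pow (cone_space Z)"
  unfolding cone_gen_def by auto

lemma space_meas_cone: "space (meas_cone Z) = cone_space Z"
  unfolding meas_cone_alt by (rule space_measure_of[OF cone_gen_sub])

lemma cone_space_iff: "x \<in> cone_space Z \<longleftrightarrow> x = None \<or> (\<exists>z t. x = Some (z,t) \<and> z \<in> space Z \<and> t > 0)"
proof
  assume "x \<in> cone_space Z" then show "x = None \<or> (\<exists>z t. x = Some (z,t) \<and> z \<in> space Z \<and> t > 0)"
    unfolding cone_space_def cone_quot_def by (auto split: if_splits)
next
  assume "x = None \<or> (\<exists>z t. x = Some (z,t) \<and> z \<in> space Z \<and> t > 0)"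
  then show "x \<in> cone_space Z"
  proof
    assume "\<exists>z t. x = Some (z,t) \<and> z \<in> space Z \<and> t > 0"
    then obtain z t where "x = Some (z,t)" "z \<in> space Z" "t > 0" by blast
    then have "x = cone_quot (z,t)" "(z,t) \<in> space Z \<times> {0..}" by (auto simp: cone_quot_def)
    then show ?thesis unfolding cone_space_def by blast
  qed (simp add: cone_space_def)
qed

lemma space_cone_pair: "space (Z \<Otimes>\<^sub>M restrict_space borel {0::real..}) = space Z \<times> {0..}"
  by (simp add: space_pair_measure space_restrict_space)

lemma cone_quot_space: "p \<in> space Z \<times> {0::real..} \<Longrightarrow> cone_quot p \<in> cone_space Z"
  unfolding cone_space_def by auto

lemma measurable_from_cone:
  fixes g :: "('b \<times> real) option \<Rightarrow> 'c::topological_space"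
  assumes "(\<lambda>p. g (cone_quot p)) \<in> borel_measurable (Z \<Otimes>\<^sub>M restrict_space borel {0::real..})"
  shows "g \<in> borel_measurable (meas_cone Z)"
  unfolding measurable_def
proof (safe)
  fix S :: "'c set" assume S: "S \<in> sets borel"
  have "g -` S \<inter> cone_space Z \<in> cone_gen Z"
    unfolding cone_gen_def
  proof safe
    have "cone_quot -` (g -` S \<inter> cone_space Z) \<inter> space (Z \<Otimes>\<^sub>M restrict_space borel {0::real..})
       = (\<lambda>p. g (cone_quot p)) -` S \<inter> space (Z \<Otimes>\<^sub>M restrict_space borel {0::real..})"
      using cone_quot_space[of _ Z] by (auto simp: space_cone_pair)
    also have "\<dots> \<in> sets (Z \<Otimes>\<^sub>M restrict_space borel {0::real..})"
      using assms S by (rule measurable_sets)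
    finally show "cone_quot -` (g -` S \<inter> cone_space Z) \<inter> space (Z \<Otimes>\<^sub>M restrict_space borel {0::real..})
      \<in> sets (Z \<Otimes>\<^sub>M restrict_space borel {0::real..})" .
  qed
  then have "g -` S \<inter> cone_space Z \<in> sets (meas_cone Z)"
    unfolding meas_cone_alt sets_measure_of[OF cone_gen_sub]
    by (rule sigma_sets.Basic)
  then show "g -` S \<inter> space (meas_cone Z) \<in> sets (meas_cone Z)"
    by (simp add: space_meas_cone)
qed auto

lemma measurable_to_cone:
  assumes S: "S \<in> sets N"
    and none: "\<And>x. x \<in> space N - S \<Longrightarrow> f x = None"
    and some: "\<And>x. x \<in> space N \<Longrightarrow> x \<in> S \<Longrightarrow> f x = Some (h x) \<and> snd (h x) > 0"
    and h: "h \<in> restrict_space N S \<rightarrow>\<^sub>M (Z \<Otimes>\<^sub>M restrict_space borel {0::real..})"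
  shows "f \<in> N \<rightarrow>\<^sub>M meas_cone Z"
  unfolding meas_cone_alt
proof (rule measurable_measure_of[OF cone_gen_sub])
  have hsp: "h x \<in> space Z \<times> {0..}" if "x \<in> space N" "x \<in> S" for x
    using measurable_space[OF h, of x] that by (simp add: space_restrict_space space_cone_pair)
  show "f \<in> space N \<rightarrow> cone_space Z"
  proof
    fix x assume x: "x \<in> space N"
    show "f x \<in> cone_space Z"
    proof (cases "x \<in> S")
      case True
      then have "f x = cone_quot (h x)" using some[OF x True]
        by (auto simp: cone_quot_def split: prod.splits)
      then show ?thesis using hsp[OF x True] cone_quot_space by simp
    next
      case False then show ?thesis using none x by (simp add: cone_space_def)
    qed
  qed
  fix U assume U: "U \<in> cone_gen Z"
  let ?P = "Z \<Otimes>\<^sub>M restrict_space borel {0::real..}"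
  have "h -` (cone_quot -` U \<inter> space ?P) \<inter> space (restrict_space N S) \<in> sets (restrict_space N S)"
    using U h unfolding cone_gen_def by (intro measurable_sets[OF h]) auto
  then have A: "h -` (cone_quot -` U \<inter> space ?P) \<inter> (S \<inter> space N) \<in> sets N"
    using S by (simp add: space_restrict_space sets_restrict_space_iff Int_absorb2 sets.sets_into_space Int_commute)
  have B: "space N - S \<in> sets N" using S by auto
  have "f -` U \<inter> space N = (if None \<in> U then space N - S else {}) \<union> (h -` (cone_quot -` U \<inter> space ?P) \<inter> (S \<inter> space N))"
  proof -
    { fix x assume x: "x \<in> space N" "x \<in> S"
      then have "f x = cone_quot (h x)" using some[OF x]
        by (auto simp: cone_quot_def split: prod.splits)
      then have "f x \<in> U \<longleftrightarrow> h x \<in> cone_quot -` U \<inter> space ?P"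
        using hsp[OF x] by (simp add: space_cone_pair) }
    note * = this
    show ?thesis
    proof (intro set_eqI iffI)
      fix x assume "x \<in> f -` U \<inter> space N"
      then show "x \<in> (if None \<in> U then space N - S else {}) \<union> (h -` (cone_quot -` U \<inter> space ?P) \<inter> (S \<inter> space N))"
        using *[of x] none[of x] by (cases "x \<in> S") auto
    next
      fix x assume "x \<in> (if None \<in> U then space N - S else {}) \<union> (h -` (cone_quot -` U \<inter> space ?P) \<inter> (S \<inter> space N))"
      then show "x \<in> f -` U \<inter> space N"
        using *[of x] none[of x] by (cases "x \<in> S"; cases "None \<in> U") auto
    qed
  qed
  also have "\<dots> \<in> sets N" using A B by auto
  finally show "f -` U \<inter> space N \<in> sets N" .
qed

lemma suminf_swap_ennreal:
  fixes h :: "nat \<Rightarrow> nat \<Rightarrow> ennreal"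
  shows "(\<Sum>i. \<Sum>n. h i n) = (\<Sum>n. \<Sum>i. h i n)"
proof -
  have "(\<Sum>i. \<Sum>n. h i n) = (\<integral>\<^sup>+i. (\<Sum>n. h i n) \<partial>count_space UNIV)"
    by (simp add: nn_integral_count_space_nat)
  also have "\<dots> = (\<Sum>n. \<integral>\<^sup>+i. h i n \<partial>count_space UNIV)"
    by (rule nn_integral_suminf) simp
  also have "\<dots> = (\<Sum>n. \<Sum>i. h i n)"
    by (simp add: nn_integral_count_space_nat)
  finally show ?thesis .
qed

lemma emeasure_sum_ca:
  assumes ca: "\<And>n. countably_additive (sets M) (\<mu> n)" and e: "\<And>n. \<mu> n {} = 0"
    and B: "B \<in> sets M"
  shows "emeasure (measure_of (space M) (sets M) (\<lambda>B. \<Sum>n. \<mu> n B)) B = (\<Sum>n. \<mu> n B)"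
proof (rule emeasure_measure_of_sigma[OF sets.sigma_algebra_axioms _ _ B])
  show "positive (sets M) (\<lambda>B. \<Sum>n. \<mu> n B)" unfolding positive_def using e by simp
  show "countably_additive (sets M) (\<lambda>B. \<Sum>n. \<mu> n B)"
    unfolding countably_additive_def
  proof safe
    fix F :: "nat \<Rightarrow> _" assume F: "range F \<subseteq> sets M" "disjoint_family F" "\<Union> (range F) \<in> sets M"
    have "(\<Sum>i. \<Sum>n. \<mu> n (F i)) = (\<Sum>n. \<Sum>i. \<mu> n (F i))" by (rule suminf_swap_ennreal)
    also have "\<dots> = (\<Sum>n. \<mu> n (\<Union> (range F)))"
      using ca F unfolding countably_additive_def by simp
    finally show "(\<Sum>i. \<Sum>n. \<mu> n (F i)) = (\<Sum>n. \<mu> n (\<Union> (range F)))" .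
  qed
qed

definition wfun :: "(nat \<Rightarrow> 'a set) \<Rightarrow> nat \<Rightarrow> ('a measure \<times> real) option \<Rightarrow> 'a set \<Rightarrow> ennreal" where
  "wfun A n c B = (case c of None \<Rightarrow> 0 | Some (p,t) \<Rightarrow> ennreal t * emeasure p (B \<inter> A n))"

lemma measurable_emeasure_prob_algebra[measurable]:
  "X \<in> sets N \<Longrightarrow> (\<lambda>p. emeasure p X) \<in> borel_measurable (prob_algebra N)"
  unfolding prob_algebra_def by (intro measurable_restrict_space1 measurable_emeasure_subprob_algebra)

lemma wfun_cone_quot:
  "wfun A n (cone_quot q) B = (case q of (p,t) \<Rightarrow> if t = 0 then 0 else ennreal t * emeasure p (B \<inter> A n))"
  by (cases q) (simp add: wfun_def cone_quot_def)

lemma measurable_wfun: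
  assumes "A n \<in> sets M" "B \<in> sets M"
  shows "(\<lambda>c. wfun A n c B) \<in> borel_measurable (meas_cone (prob_algebra (restrict_space M (A n))))"
proof (rule measurable_from_cone)
  have X: "B \<inter> A n \<in> sets (restrict_space M (A n))"
    using assms by (auto simp: sets_restrict_space_iff)
  show "(\<lambda>q. wfun A n (cone_quot q) B) \<in> borel_measurable (prob_algebra (restrict_space M (A n)) \<Otimes>\<^sub>M restrict_space borel {0::real..})"
  proof -
    let ?P = "prob_algebra (restrict_space M (A n)) \<Otimes>\<^sub>M restrict_space borel {0::real..}"
    have [measurable]: "(\<lambda>q. snd q) \<in> borel_measurable ?P"
      by (rule measurable_compose[OF measurable_snd]) (rule measurable_restrict_space1, simp)
    have [measurable]: "(\<lambda>q. emeasure (fst q) (B \<inter> A n)) \<in> borel_measurable ?P"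
      by (rule measurable_compose[OF measurable_fst measurable_emeasure_prob_algebra[OF X]])
    have "(\<lambda>q. if snd q = 0 then 0 else ennreal (snd q) * emeasure (fst q) (B \<inter> A n)) \<in> borel_measurable ?P"
      by measurable
    then show ?thesis unfolding wfun_cone_quot by (simp add: case_prod_beta)
  qed
qed

lemma wfun_empty: "wfun A n c {} = 0"
  by (simp add: wfun_def split: option.splits)

lemma wfun_disj:
  assumes "disjoint_family A" "X \<subseteq> A n" "m \<noteq> n"
  shows "wfun A m c X = 0"
proof -
  have "X \<inter> A m = {}" using assms unfolding disjoint_family_on_def by blast
  then show ?thesis by (simp add: wfun_def split: option.splits)
qed

lemma wfun_ca:
  assumes An: "A n \<in> sets M" and c: "c \<in> cone_space (prob_algebra (restrict_space M (A n)))"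
  shows "countably_additive (sets M) (wfun A n c)"
  unfolding countably_additive_def
proof safe
  fix F :: "nat \<Rightarrow> _" assume F: "range F \<subseteq> sets M" "disjoint_family F" "\<Union> (range F) \<in> sets M"
  show "(\<Sum>i. wfun A n c (F i)) = wfun A n c (\<Union> (range F))"
  proof (cases c)
    case None then show ?thesis by (simp add: wfun_def)
  next
    case (Some pt)
    then obtain p t where c: "c = Some (p,t)" and p: "p \<in> space (prob_algebra (restrict_space M (A n)))"
      using c unfolding cone_space_iff by auto
    have sp: "sets p = sets (restrict_space M (A n))" using p by (simp add: space_prob_algebra)
    have Fi: "range (\<lambda>i. F i \<inter> A n) \<subseteq> sets p" using F An by (auto simp: sp sets_restrict_space_iff)
    have dj: "disjoint_family (\<lambda>i. F i \<inter> A n)" using F(2) unfolding disjoint_family_on_def by blast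
    have "(\<Sum>i. emeasure p (F i \<inter> A n)) = emeasure p (\<Union>i. F i \<inter> A n)"
      by (rule suminf_emeasure[OF Fi dj])
    also have "(\<Union>i. F i \<inter> A n) = \<Union> (range F) \<inter> A n" by auto
    finally show ?thesis by (simp add: c wfun_def)
  qed
qed

lemma ennreal_inv_cancel:
  fixes a y :: ennreal
  assumes "a \<noteq> 0" "a < top"
  shows "1 / a * (a * y) = y" "a * (1 / a * y) = y"
proof -
  have "1 / a * a = 1" using assms by (simp add: ennreal_divide_times)
  then show "1 / a * (a * y) = y" "a * (1 / a * y) = y"
    by (metis mult.assoc mult.commute mult_1)+
qed



theorem lemma2p1:
  fixes M :: "'a measure" and \<xi> :: "'a measure measure" and A :: "nat \<Rightarrow> 'a set"
  assumes standard: "\<exists>\<phi> :: 'a \<Rightarrow> 'p::polish_space. borel_embedding M \<phi>"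
    and sfin: "sigma_finite_measure M"
    and xi_sets: "sets \<xi> = sets (measures_space M)"
    and xi_prob: "prob_space \<xi>"
    and bary: "has_barycenter \<xi> M"
    and A_meas: "\<And>n. A n \<in> sets M"
    and A_disj: "disjoint_family A"
    and A_cover: "(\<Union>n. A n) = space M"
    and A_fin: "\<And>n. emeasure M (A n) < \<infinity>"
  shows "iso_mod \<xi> (\<Pi>\<^sub>M n\<in>UNIV. meas_cone (prob_algebra (restrict_space M (A n))))"
proof -
  define Z where "Z n = prob_algebra (restrict_space M (A n))" for n
  define P where "P = (\<Pi>\<^sub>M n\<in>UNIV. meas_cone (Z n))"
  define R where "R = restrict_space borel {0::real..}"
  define Y where "Y = {\<gamma> \<in> space \<xi>. \<forall>n. emeasure \<gamma> (A n) < \<infinity>}"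
  define \<Phi> where "\<Phi> \<gamma> = (\<lambda>n. if emeasure \<gamma> (A n) = 0 then None else
      Some (scale_measure (1 / emeasure \<gamma> (A n)) (restrict_space \<gamma> (A n)), enn2real (emeasure \<gamma> (A n))))"
    for \<gamma> :: "'a measure"
  define \<psi> where "\<psi> x = measure_of (space M) (sets M) (\<lambda>B. \<Sum>n. wfun A n (x n) B)"
    for x :: "nat \<Rightarrow> ('a measure \<times> real) option"
  have spX: "space \<xi> = {\<gamma>. sets \<gamma> = sets M}"
    using sets_eq_imp_space_eq[OF xi_sets] by (simp add: space_measures_space)
  have A_sub: "A n \<subseteq> space M" for n using A_meas sets.sets_into_space by blast
  have meas_em[measurable]: "(\<lambda>\<gamma>. emeasure \<gamma> B) \<in> borel_measurable \<xi>" if "B \<in> sets M" for B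
    by (subst measurable_cong_sets[OF xi_sets refl]) (rule measurable_emeasure_measures_space[OF that])
  have Y_sets: "Y \<in> sets \<xi>"
    unfolding Y_def using A_meas by measurable
  have spP: "space P = (\<Pi>\<^sub>E n\<in>UNIV. cone_space (Z n))"
    unfolding P_def space_PiM space_meas_cone ..
  have null: "emeasure \<xi> (space \<xi> - Y) = 0"
  proof -
    have "AE \<gamma> in \<xi>. emeasure \<gamma> (A n) < \<infinity>" for n
    proof -
      have "integrable M (indicator (A n) :: 'a \<Rightarrow> real)"
        using A_meas A_fin A_sub by (simp add: integrable_indicator_iff Int_absorb2)
      then have "AE \<gamma> in \<xi>. integrable \<gamma> (indicator (A n) :: 'a \<Rightarrow> real)"
        using bary unfolding has_barycenter_def by blast
      then show ?thesis
      proof (rule AE_mp[OF _ AE_I2[OF impI]])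
        fix \<gamma> assume g: "\<gamma> \<in> space \<xi>" "integrable \<gamma> (indicator (A n) :: 'a \<Rightarrow> real)"
        then have "space \<gamma> = space M" using spX sets_eq_imp_space_eq[of \<gamma> M] by auto
        then show "emeasure \<gamma> (A n) < \<infinity>" using g(2) A_sub
          by (simp add: integrable_indicator_iff Int_absorb2)
      qed
    qed
    then have "AE \<gamma> in \<xi>. \<forall>n. emeasure \<gamma> (A n) < \<infinity>" by (simp add: AE_all_countable)
    moreover have "{\<gamma> \<in> space \<xi>. \<not> (\<forall>n. emeasure \<gamma> (A n) < \<infinity>)} = space \<xi> - Y" by (auto simp: Y_def)
    ultimately show ?thesis using AE_iff_measurable[of "space \<xi> - Y" \<xi>] Y_sets by auto
  qed
  have sets_g: "sets \<gamma> = sets M" "space \<gamma> = space M" if "\<gamma> \<in> space \<xi>" for \<gamma>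
    using that spX sets_eq_imp_space_eq[of \<gamma> M] by auto
  have Phi_n: "(\<lambda>\<gamma>. \<Phi> \<gamma> n) \<in> restrict_space \<xi> Y \<rightarrow>\<^sub>M meas_cone (Z n)" for n
  proof -
    define S where "S = {\<gamma> \<in> Y. emeasure \<gamma> (A n) \<noteq> 0}"
    have S_sets: "S \<in> sets \<xi>" unfolding S_def Y_def using A_meas by measurable
    have SY: "S \<subseteq> Y" by (auto simp: S_def)
    define h where "h = (\<lambda>\<gamma>::'a measure. (scale_measure (1 / emeasure \<gamma> (A n)) (restrict_space \<gamma> (A n)), enn2real (emeasure \<gamma> (A n))))"
    have rr: "restrict_space (restrict_space \<xi> Y) S = restrict_space \<xi> S"
      using Y_sets S_sets SY by (simp add: restrict_restrict_space Int_absorb1 Int_absorb2 sets.sets_into_space)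
    have h_meas: "h \<in> restrict_space \<xi> S \<rightarrow>\<^sub>M Z n \<Otimes>\<^sub>M R"
      unfolding h_def
    proof (rule measurable_Pair)
      have em: "emeasure (scale_measure (1 / emeasure \<gamma> (A n)) (restrict_space \<gamma> (A n))) X
          = 1 / emeasure \<gamma> (A n) * emeasure \<gamma> X" if "\<gamma> \<in> space \<xi>" "X \<in> sets (restrict_space M (A n))" for \<gamma> X
        using that A_meas[of n] sets_g[OF that(1)]
        by (simp add: sets_restrict_space_iff emeasure_restrict_space Int_absorb2 A_sub)
      have em2: "emeasure (restrict_space \<gamma> (A n)) X = emeasure \<gamma> X" if "\<gamma> \<in> space \<xi>" "X \<in> sets (restrict_space M (A n))" for \<gamma> X
      proof -
        have "A n \<inter> space M \<in> sets M" using A_meas A_sub by (simp add: Int_absorb2)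
        then have XA: "X \<subseteq> A n" using that(2) sets_restrict_space_iff by blast
        have "A n \<inter> space \<gamma> \<in> sets \<gamma>" using sets_g[OF that(1)] A_meas A_sub by (simp add: Int_absorb2)
        then show ?thesis using XA by (rule emeasure_restrict_space)
      qed
      show "(\<lambda>\<gamma>. scale_measure (1 / emeasure \<gamma> (A n)) (restrict_space \<gamma> (A n))) \<in> restrict_space \<xi> S \<rightarrow>\<^sub>M Z n"
        unfolding Z_def
      proof (rule measurable_prob_algebraI)
        fix \<gamma> assume g: "\<gamma> \<in> space (restrict_space \<xi> S)"
        then have g': "\<gamma> \<in> space \<xi>" "\<gamma> \<in> S" by (auto simp: space_restrict_space S_def Y_def)
        then have fin: "emeasure \<gamma> (A n) < \<infinity>" "emeasure \<gamma> (A n) \<noteq> 0" by (auto simp: S_def Y_def)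
        show "prob_space (scale_measure (1 / emeasure \<gamma> (A n)) (restrict_space \<gamma> (A n)))"
        proof (rule prob_spaceI)
          have "space (restrict_space \<gamma> (A n)) = A n" using sets_g[OF g'(1)] A_sub by (simp add: space_restrict_space Int_absorb2)
          moreover have "A n \<in> sets (restrict_space M (A n))" using A_meas by (simp add: sets_restrict_space_iff)
          ultimately show "emeasure (scale_measure (1 / emeasure \<gamma> (A n)) (restrict_space \<gamma> (A n)))
              (space (scale_measure (1 / emeasure \<gamma> (A n)) (restrict_space \<gamma> (A n)))) = 1"
            using em[OF g'(1)] fin by (simp add: ennreal_divide_times space_scale_measure)
        qed
      next
        show "(\<lambda>\<gamma>. scale_measure (1 / emeasure \<gamma> (A n)) (restrict_space \<gamma> (A n))) \<in> restrict_space \<xi> S \<rightarrow>\<^sub>M subprob_algebra (restrict_space M (A n))"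
        proof (rule measurable_subprob_algebra)
          fix \<gamma> assume g: "\<gamma> \<in> space (restrict_space \<xi> S)"
          then have g': "\<gamma> \<in> space \<xi>" "\<gamma> \<in> S" by (auto simp: space_restrict_space S_def Y_def)
          then have fin: "emeasure \<gamma> (A n) < \<infinity>" "emeasure \<gamma> (A n) \<noteq> 0" by (auto simp: S_def Y_def)
          show "sets (scale_measure (1 / emeasure \<gamma> (A n)) (restrict_space \<gamma> (A n))) = sets (restrict_space M (A n))"
            using sets_restrict_space_cong[OF sets_g(1)[OF g'(1)]] by simp
          have "space (restrict_space \<gamma> (A n)) = A n" using sets_g[OF g'(1)] A_sub by (simp add: space_restrict_space Int_absorb2)
          moreover have "A n \<in> sets (restrict_space M (A n))" using A_meas by (simp add: sets_restrict_space_iff)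
          ultimately have "emeasure (scale_measure (1 / emeasure \<gamma> (A n)) (restrict_space \<gamma> (A n)))
              (space (scale_measure (1 / emeasure \<gamma> (A n)) (restrict_space \<gamma> (A n)))) = 1"
            using em[OF g'(1)] fin by (simp add: ennreal_divide_times space_scale_measure)
          then show "subprob_space (scale_measure (1 / emeasure \<gamma> (A n)) (restrict_space \<gamma> (A n)))"
            using prob_spaceI by (blast intro: prob_space_imp_subprob_space)
        next
          fix X assume X: "X \<in> sets (restrict_space M (A n))"
          then have XM: "X \<in> sets M" using A_meas by (simp add: sets_restrict_space_iff)
          have "(\<lambda>\<gamma>. 1 / emeasure \<gamma> (A n) * emeasure \<gamma> X) \<in> borel_measurable \<xi>"
            using XM A_meas by measurable
          then have "(\<lambda>\<gamma>. 1 / emeasure \<gamma> (A n) * emeasure \<gamma> X) \<in> borel_measurable (restrict_space \<xi> S)"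
            by (rule measurable_restrict_space1)
          then show "(\<lambda>\<gamma>. emeasure (scale_measure (1 / emeasure \<gamma> (A n)) (restrict_space \<gamma> (A n))) X) \<in> borel_measurable (restrict_space \<xi> S)"
          proof (rule measurable_cong[THEN iffD1, rotated])
            fix w assume "w \<in> space (restrict_space \<xi> S)"
            then have w: "w \<in> space \<xi>" by (auto simp: space_restrict_space S_def Y_def)
            show "1 / emeasure w (A n) * emeasure w X = emeasure (scale_measure (1 / emeasure w (A n)) (restrict_space w (A n))) X"
              unfolding emeasure_scale_measure em2[OF w X] ..
          qed
        qed
      qed
    next
      show "(\<lambda>\<gamma>. enn2real (emeasure \<gamma> (A n))) \<in> restrict_space \<xi> S \<rightarrow>\<^sub>M R"
        unfolding R_def using A_meas
        by (intro measurable_restrict_space2 measurable_restrict_space1) (auto simp: enn2real_nonneg)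
    qed
    show ?thesis
    proof (rule measurable_to_cone[where S=S and h=h])
      show "S \<in> sets (restrict_space \<xi> Y)" using Y_sets S_sets SY by (simp add: sets_restrict_space_iff)
      show "h \<in> restrict_space (restrict_space \<xi> Y) S \<rightarrow>\<^sub>M Z n \<Otimes>\<^sub>M restrict_space borel {0..}"
        using h_meas unfolding rr R_def .
    next
      fix x assume "x \<in> space (restrict_space \<xi> Y) - S"
      then show "\<Phi> x n = None" using Y_sets by (auto simp: S_def \<Phi>_def space_restrict_space)
    next
      fix x assume "x \<in> space (restrict_space \<xi> Y)" "x \<in> S"
      then have "emeasure x (A n) < \<infinity>" "emeasure x (A n) \<noteq> 0" by (auto simp: S_def Y_def)
      then show "\<Phi> x n = Some (h x) \<and> 0 < snd (h x)"
        by (auto simp: \<Phi>_def h_def enn2real_positive_iff intro: gr_zeroI)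
    qed
  qed
  have Phi_meas: "\<Phi> \<in> restrict_space \<xi> Y \<rightarrow>\<^sub>M P"
  proof -
    have "(\<lambda>\<gamma> n. \<Phi> \<gamma> n) \<in> restrict_space \<xi> Y \<rightarrow>\<^sub>M P"
      unfolding P_def
      by (rule measurable_PiM_single') (use Phi_n measurable_space[OF Phi_n] in auto)
    then show ?thesis by simp
  qed
  have sets_psi: "sets (\<psi> x) = sets M" for x
    unfolding \<psi>_def by (simp add: sets.space_closed sets.sigma_sets_eq)
  have xcone: "x n \<in> cone_space (prob_algebra (restrict_space M (A n)))" if "x \<in> space P" for x n
    using that by (auto simp: spP Z_def)
  have em_psi: "emeasure (\<psi> x) B = (\<Sum>n. wfun A n (x n) B)" if "x \<in> space P" "B \<in> sets M" for x B
    unfolding \<psi>_def by (rule emeasure_sum_ca[OF wfun_ca[OF A_meas xcone[OF that(1)]] wfun_empty that(2)])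
  have single: "emeasure (\<psi> x) X = wfun A n (x n) X" if "x \<in> space P" "X \<in> sets M" "X \<subseteq> A n" for x X n
  proof -
    have "(\<Sum>m. wfun A m (x m) X) = (\<Sum>m\<in>{n}. wfun A m (x m) X)"
      by (rule suminf_finite) (use wfun_disj[OF A_disj that(3)] in auto)
    then show ?thesis using em_psi[OF that(1,2)] by simp
  qed
  have pfacts: "sets p = sets (restrict_space M (A n)) \<and> prob_space p \<and> space p = A n"
    if "p \<in> space (prob_algebra (restrict_space M (A n)))" for p n
  proof -
    have "sets p = sets (restrict_space M (A n))" "prob_space p" using that by (auto simp: space_prob_algebra)
    moreover have "space p = A n" using sets_eq_imp_space_eq[OF calculation(1)] A_sub
      by (simp add: space_restrict_space Int_absorb2)
    ultimately show ?thesis by blast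
  qed
  have wfun_An: "wfun A n c (A n) = (case c of None \<Rightarrow> 0 | Some (p,t) \<Rightarrow> ennreal t)"
    if cs: "c \<in> cone_space (prob_algebra (restrict_space M (A n)))" for c n
  proof (cases c)
    case None then show ?thesis by (simp add: wfun_def)
  next
    case (Some pt)
    then obtain p t where c: "c = Some (p,t)" and p: "p \<in> space (prob_algebra (restrict_space M (A n)))"
      using cs Some unfolding cone_space_iff by force
    then have "emeasure p (A n) = 1" using pfacts[OF p] prob_space.emeasure_space_1 by metis
    then show ?thesis by (simp add: c wfun_def)
  qed
  have psiY: "\<psi> x \<in> Y" if "x \<in> space P" for x
  proof -
    have "emeasure (\<psi> x) (A n) < \<infinity>" for n
      using single[OF that A_meas order_refl, of n] wfun_An[OF xcone[OF that]]
      by (auto split: option.splits)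
    then show ?thesis unfolding Y_def spX using sets_psi by auto
  qed
  have psi_meas: "\<psi> \<in> P \<rightarrow>\<^sub>M restrict_space \<xi> Y"
  proof (rule measurable_restrict_space2)
    show "\<psi> \<in> space P \<rightarrow> Y" using psiY by auto
    show "\<psi> \<in> P \<rightarrow>\<^sub>M \<xi>"
      unfolding measurable_cong_sets[OF refl xi_sets]
    proof (rule measurable_measures_spaceI)
      fix B assume B: "B \<in> sets M"
      have [measurable]: "(\<lambda>x. wfun A n (x n) B) \<in> borel_measurable P" for n
        unfolding P_def Z_def
        by (rule measurable_compose[OF measurable_component_singleton[of n UNIV "\<lambda>n. meas_cone (prob_algebra (restrict_space M (A n)))"] measurable_wfun[of A n M B, OF A_meas B]]) simp
      have "(\<lambda>x. \<Sum>n. wfun A n (x n) B) \<in> borel_measurable P" by measurable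
      then show "(\<lambda>x. emeasure (\<psi> x) B) \<in> borel_measurable P"
        by (rule measurable_cong[THEN iffD1, rotated]) (simp add: em_psi B)
    qed (rule sets_psi)
  qed
  have PhiP: "\<Phi> \<gamma> \<in> space P" if "\<gamma> \<in> Y" for \<gamma>
    using measurable_space[OF Phi_meas, of \<gamma>] that by (auto simp: space_restrict_space Y_def)
  have inv: "\<psi> (\<Phi> \<gamma>) = \<gamma>" if g: "\<gamma> \<in> Y" for \<gamma>
  proof -
    have g': "\<gamma> \<in> space \<xi>" using g by (simp add: Y_def)
    have fin: "emeasure \<gamma> (A n) < \<infinity>" for n using g by (simp add: Y_def)
    show ?thesis
    proof (rule measure_eqI)
      show "sets (\<psi> (\<Phi> \<gamma>)) = sets \<gamma>" using sets_psi sets_g[OF g'] by simp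
      fix B assume "B \<in> sets (\<psi> (\<Phi> \<gamma>))"
      then have B: "B \<in> sets M" by (simp add: sets_psi)
      have w: "wfun A n (\<Phi> \<gamma> n) B = emeasure \<gamma> (B \<inter> A n)" for n
      proof (cases "emeasure \<gamma> (A n) = 0")
        case True
        have "emeasure \<gamma> (B \<inter> A n) \<le> emeasure \<gamma> (A n)"
          using A_meas sets_g[OF g'] by (intro emeasure_mono) auto
        then show ?thesis using True by (simp add: \<Phi>_def wfun_def)
      next
        case False
        have "A n \<inter> space \<gamma> \<in> sets \<gamma>" using sets_g[OF g'] A_meas A_sub by (simp add: Int_absorb2)
        then have r: "emeasure (restrict_space \<gamma> (A n)) (B \<inter> A n) = emeasure \<gamma> (B \<inter> A n)"
          by (rule emeasure_restrict_space) auto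
        have e: "ennreal (enn2real (emeasure \<gamma> (A n))) = emeasure \<gamma> (A n)"
          using fin[of n] by (simp add: ennreal_enn2real)
        show ?thesis using False fin[of n]
          by (simp add: \<Phi>_def wfun_def r e ennreal_inv_cancel Int_assoc)
      qed
      have "(\<Sum>n. emeasure \<gamma> (B \<inter> A n)) = emeasure \<gamma> (\<Union>n. B \<inter> A n)"
      proof (rule suminf_emeasure)
        show "range (\<lambda>n. B \<inter> A n) \<subseteq> sets \<gamma>" using sets_g[OF g'] B A_meas by auto
        show "disjoint_family (\<lambda>n. B \<inter> A n)" using A_disj unfolding disjoint_family_on_def by blast
      qed
      also have "(\<Union>n. B \<inter> A n) = B" using A_cover sets.sets_into_space[OF B] by auto
      finally show "emeasure (\<psi> (\<Phi> \<gamma>)) B = emeasure \<gamma> B"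
        using em_psi[OF PhiP[OF g] B] w by simp
    qed
  qed
  have inj: "inj_on \<Phi> Y" by (rule inj_on_inverseI[of _ \<psi>]) (rule inv)
  have PhiPsi: "\<Phi> (\<psi> x) = x" if x: "x \<in> space P" for x
  proof
    fix n
    have eA: "emeasure (\<psi> x) (A n) = (case x n of None \<Rightarrow> 0 | Some (p,t) \<Rightarrow> ennreal t)"
      using single[OF x A_meas order_refl, of n] wfun_An[OF xcone[OF x]] by simp
    show "\<Phi> (\<psi> x) n = x n"
    proof (cases "x n")
      case None then show ?thesis using eA by (simp add: \<Phi>_def)
    next
      case (Some pt)
      then obtain p t where c: "x n = Some (p,t)" and p: "p \<in> space (prob_algebra (restrict_space M (A n)))"
        and t: "t > 0"
        using xcone[OF x, of n] unfolding cone_space_iff by force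
      have eA': "emeasure (\<psi> x) (A n) = ennreal t" using eA c by simp
      have "scale_measure (1 / ennreal t) (restrict_space (\<psi> x) (A n)) = p"
      proof (rule measure_eqI)
        show ss: "sets (scale_measure (1 / ennreal t) (restrict_space (\<psi> x) (A n))) = sets p"
          using sets_restrict_space_cong[OF sets_psi[of x], of "A n"] pfacts[OF p] by simp
        fix X assume "X \<in> sets (scale_measure (1 / ennreal t) (restrict_space (\<psi> x) (A n)))"
        then have "X \<in> sets (restrict_space M (A n))" using ss pfacts[OF p] by simp
        moreover have "A n \<inter> space M \<in> sets M" using A_meas A_sub by (simp add: Int_absorb2)
        ultimately have X: "X \<subseteq> A n" "X \<in> sets M" using sets_restrict_space_iff by blast+
        have "A n \<inter> space (\<psi> x) \<in> sets (\<psi> x)"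
          using sets_psi[of x] sets_eq_imp_space_eq[OF sets_psi[of x]] A_meas A_sub by (simp add: Int_absorb2)
        then have r: "emeasure (restrict_space (\<psi> x) (A n)) X = emeasure (\<psi> x) X"
          using X(1) by (rule emeasure_restrict_space)
        have "emeasure (\<psi> x) X = ennreal t * emeasure p X"
          using single[OF x X(2) X(1)] X(1) by (simp add: c wfun_def Int_absorb2)
        then show "emeasure (scale_measure (1 / ennreal t) (restrict_space (\<psi> x) (A n))) X = emeasure p X"
          using t by (simp add: r ennreal_inv_cancel)
      qed
      then show ?thesis using eA' t by (simp add: \<Phi>_def c)
    qed
  qed
  have img: "\<Phi> ` Y = space P"
  proof
    show "\<Phi> ` Y \<subseteq> space P" using PhiP by auto
    show "space P \<subseteq> \<Phi> ` Y"
    proof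
      fix x assume "x \<in> space P"
      then show "x \<in> \<Phi> ` Y" using PhiPsi psiY by (metis image_eqI)
    qed
  qed
  show ?thesis
    unfolding iso_mod_def
    using Y_sets null Phi_meas inj img psi_meas inv unfolding P_def Z_def by blast
qed

end
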